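(* Let $n_0$ be a nonnegative bounded measurable function on $(0,\infty)$ with $\lim_{x\to\infty}x^2n_0(x)=0$, and let $n$ be the global solution of the Kompaneets problem with initial data $n_0$. Then whenever $0\le s\le t$, \[ N(n_t) + \int_s^t n_\tau(0)^2\,d\tau = N(n_s). \]
   Context: The Kompaneets problem: for $x>0$, $t>0$, $\partial_t n = \partial_x J$ with $J(x,n) = x^2\partial_x n + (x^2-2x)n + n^2$, together with $\lim_{x\to\infty} J(x,n_t)=0$; no boundary condition at $x=0$. $n_t(x)=n(x,t)$. For such $n_0$ there is a unique nonnegative solution $n \in C([0,\infty);L^1)\cap L^\infty_{loc}([0,\infty);L^\infty)\cap C^{2,1}((0,\infty)^2)$ (the global solution); it satisfies, for every $T<\infty$, $x^2n_t(x)\to0$ as $x\to\infty$ uniformly for $0\le t<T$ and $x^2\partial_xn(x,t)\to 0$ uniformly on $\{1/x^2\le t<T\}$. For $t>0$, $n_t(0)=\lim_{x\to0^+}n_t(x)$ (which exists). $N(n)=\int_0^\infty n\,dx$. *)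

theory Defs
  imports "HOL-Analysis.Analysis"
begin

text \<open>Solutions are functions n x t (space variable x first, time t second),
  only their values on x > 0, t \<ge> 0 matter.\<close>

definition kompaneets_flux ::
  "(real \<Rightarrow> real \<Rightarrow> real) \<Rightarrow> (real \<Rightarrow> real \<Rightarrow> real) \<Rightarrow> real \<Rightarrow> real \<Rightarrow> real" where
  "kompaneets_flux n nx x t = x\<^sup>2 * nx x t + (x\<^sup>2 - 2 * x) * n x t + (n x t)\<^sup>2"

definition photon_number :: "(real \<Rightarrow> real \<Rightarrow> real) \<Rightarrow> real \<Rightarrow> real" where
  "photon_number n t = integral {0<..} (\<lambda>x. n x t)"

definition boundary_value :: "(real \<Rightarrow> real \<Rightarrow> real) \<Rightarrow> real \<Rightarrow> real" where
  "boundary_value n t = Lim (at_right 0) (\<lambda>x. n x t)"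

text \<open>n is the (unique) nonnegative global solution of the Kompaneets problem with
  initial datum n0, in the class
  C([0,\<infinity>);L^1) \<inter> L^\<infinity>_loc([0,\<infinity>);L^\<infinity>) \<inter> C^{2,1}((0,\<infinity>)^2),
  together with the properties the global solution is known to satisfy.\<close>
definition kompaneets_global_solution ::
  "(real \<Rightarrow> real) \<Rightarrow> (real \<Rightarrow> real \<Rightarrow> real) \<Rightarrow> bool" where
  "kompaneets_global_solution n0 n \<longleftrightarrow>
     \<comment> \<open>initial datum and nonnegativity\<close>
     (\<forall>x>0. n x 0 = n0 x) \<and>
     (\<forall>x>0. \<forall>t\<ge>0. 0 \<le> n x t) \<and>
     \<comment> \<open>C([0,\<infinity>);L^1)\<close>
     (\<forall>t\<ge>0. (\<lambda>x. n x t) absolutely_integrable_on {0<..}) \<and>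
     (\<forall>t\<ge>0. ((\<lambda>s. integral {0<..} (\<lambda>x. \<bar>n x s - n x t\<bar>)) \<longlongrightarrow> 0)
                 (at t within {0..})) \<and>
     \<comment> \<open>L^\<infinity>_loc([0,\<infinity>);L^\<infinity>)\<close>
     (\<forall>T. \<exists>M. \<forall>t\<in>{0..T}. \<forall>x>0. \<bar>n x t\<bar> \<le> M) \<and>
     \<comment> \<open>C^{2,1} on (0,\<infinity>)^2, the equation, boundary condition and decay\<close>
     (\<exists>nx nxx nt.
        continuous_on ({0<..} \<times> {0<..}) (\<lambda>(x,t). n x t) \<and>
        continuous_on ({0<..} \<times> {0<..}) (\<lambda>(x,t). nx x t) \<and>
        continuous_on ({0<..} \<times> {0<..}) (\<lambda>(x,t). nxx x t) \<and>
        continuous_on ({0<..} \<times> {0<..}) (\<lambda>(x,t). nt x t) \<and>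
        (\<forall>x>0. \<forall>t>0.
           ((\<lambda>y. n y t) has_real_derivative nx x t) (at x) \<and>
           ((\<lambda>y. nx y t) has_real_derivative nxx x t) (at x) \<and>
           ((\<lambda>s. n x s) has_real_derivative nt x t) (at t) \<and>
           \<comment> \<open>\<partial>_t n = \<partial>_x J\<close>
           ((\<lambda>y. kompaneets_flux n nx y t) has_real_derivative nt x t) (at x)) \<and>
        \<comment> \<open>lim_{x\<rightarrow>\<infinity>} J(x,n_t) = 0\<close>
        (\<forall>t>0. ((\<lambda>x. kompaneets_flux n nx x t) \<longlongrightarrow> 0) at_top) \<and>
        \<comment> \<open>x^2 n_t(x) \<rightarrow> 0 uniformly for 0 \<le> t < T\<close>
        (\<forall>T. \<forall>e>0. \<exists>R. \<forall>x\<ge>R. \<forall>t. 0 \<le> t \<and> t < T \<longrightarrow> \<bar>x\<^sup>2 * n x t\<bar> < e) \<and>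
        \<comment> \<open>x^2 \<partial>_x n \<rightarrow> 0 uniformly on {1/x^2 \<le> t < T}\<close>
        (\<forall>T. \<forall>e>0. \<exists>R>0. \<forall>x\<ge>R. \<forall>t. 1 / x\<^sup>2 \<le> t \<and> t < T \<longrightarrow> \<bar>x\<^sup>2 * nx x t\<bar> < e)) \<and>
     \<comment> \<open>n_t(0) = lim_{x\<rightarrow>0+} n_t(x) exists for t > 0\<close>
     (\<forall>t>0. \<exists>L. ((\<lambda>x. n x t) \<longlongrightarrow> L) (at_right 0))"

end

theory Submission
  imports Defs
begin

lemma deriv_limit_zero:
  fixes Q D :: "real \<Rightarrow> real"
  assumes der: "\<And>a. a > 0 \<Longrightarrow> (Q has_real_derivative D a) (at a)"
    and lim: "(D \<longlongrightarrow> L) (at_right 0)"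
    and bnd: "\<And>a. a > 0 \<Longrightarrow> \<bar>Q a\<bar> \<le> K * a\<^sup>2"
  shows "L = 0"
proof (rule ccontr)
  assume L: "L \<noteq> 0"
  hence "\<bar>L\<bar>/2 > 0" by simp
  with lim have "\<forall>\<^sub>F a in at_right 0. dist (D a) L < \<bar>L\<bar>/2"
    using tendstoD by blast
  then obtain d where d: "d > 0" and dd: "\<And>a. a > 0 \<Longrightarrow> a < d \<Longrightarrow> dist (D a) L < \<bar>L\<bar>/2"
    unfolding eventually_at_right_field by auto
  have K0: "K \<ge> 0" using bnd[of 1] by simp
  define a where "a = min (d/2) (\<bar>L\<bar> / (16 * K + 1))"
  have a0: "a > 0" using d L K0 by (auto simp: a_def)
  have ad: "a < d" using d by (auto simp: a_def)
  obtain z where z: "a/2 < z" "z < a" and eq: "Q a - Q (a/2) = (a - a/2) * D z"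
    using MVT2[of "a/2" a Q D] a0 der by force
  have Dz: "\<bar>D z\<bar> > \<bar>L\<bar>/2" using dd[of z] z a0 ad unfolding dist_real_def by (smt (verit) field_sum_of_halves)
  have "\<bar>Q a - Q (a/2)\<bar> \<le> K * a\<^sup>2 + K * (a/2)\<^sup>2"
    using bnd[of a] bnd[of "a/2"] a0 by auto
  also have "\<dots> \<le> 2 * K * a\<^sup>2" using K0 by (simp add: power2_eq_square)
  finally have 1: "(a/2) * \<bar>D z\<bar> \<le> 2 * K * a\<^sup>2" using eq a0 by (simp add: abs_mult)
  have "(a/2) * (\<bar>L\<bar>/2) < (a/2) * \<bar>D z\<bar>" using Dz a0 by simp
  with 1 have "a * \<bar>L\<bar> < 8 * K * a\<^sup>2" by (simp add: power2_eq_square)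
  hence "\<bar>L\<bar> < 8 * K * a" using a0 by (simp add: power2_eq_square)
  moreover have "a * (16 * K + 1) \<le> \<bar>L\<bar>"
  proof -
    have "a \<le> \<bar>L\<bar> / (16 * K + 1)" by (simp add: a_def)
    thus ?thesis using K0 by (simp add: pos_le_divide_eq)
  qed
  moreover have "a * (16 * K + 1) = 16 * K * a + a" by (simp add: algebra_simps)
  moreover have "0 \<le> K * a" using K0 a0 by simp
  ultimately show False using a0 by linarith
qed

lemma cont_slice_t:
  assumes "continuous_on ({0<..} \<times> {0<..}) (\<lambda>(x,t). f x t)" "(a::real) > 0" "S \<subseteq> {0<..}"
  shows "continuous_on S (\<lambda>\<tau>. (f a \<tau>::real))"
proof -
  have "continuous_on S (\<lambda>\<tau>. (\<lambda>(x,t). f x t) (a, \<tau>))"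
    by (rule continuous_on_compose2[OF assms(1)]) (use assms in \<open>auto intro!: continuous_intros\<close>)
  thus ?thesis by simp
qed

lemma cont_slice_x:
  assumes "continuous_on ({0<..} \<times> {0<..}) (\<lambda>(x,t). f x t)" "(\<tau>::real) > 0" "S \<subseteq> {0<..}"
  shows "continuous_on S (\<lambda>x. (f x \<tau>::real))"
proof -
  have "continuous_on S (\<lambda>x. (\<lambda>(x,t). f x t) (x, \<tau>))"
    by (rule continuous_on_compose2[OF assms(1)]) (use assms in \<open>auto intro!: continuous_intros\<close>)
  thus ?thesis by simp
qed

lemma cont_swap:
  assumes "continuous_on ({0<..} \<times> {0<..}) (\<lambda>(x,t). f x t)" "A \<subseteq> {0<..}" "B \<subseteq> {0<..}"
  shows "continuous_on (B \<times> A) (\<lambda>(\<tau>::real, x::real). (f x \<tau>::real))"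
proof -
  have "continuous_on (B \<times> A) (\<lambda>p. (\<lambda>(x,t). f x t) (snd p, fst p))"
    by (rule continuous_on_compose2[OF assms(1)]) (use assms in \<open>auto intro!: continuous_intros\<close>)
  thus ?thesis by (simp add: case_prod_beta)
qed

lemma cont_sub:
  assumes "continuous_on ({0<..} \<times> {0<..}) (\<lambda>(x,t). f x t)" "A \<subseteq> {0<..}" "B \<subseteq> {0<..}"
  shows "continuous_on (A \<times> B) (\<lambda>(x::real, \<tau>::real). (f x \<tau>::real))"
  by (rule continuous_on_subset[OF assms(1)]) (use assms in auto)

lemma flux_bound:
  fixes x p q e :: real
  assumes x: "x \<ge> 1" and p: "\<bar>x\<^sup>2 * p\<bar> < e" and q: "\<bar>x\<^sup>2 * q\<bar> < e" and e: "e \<le> 1"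
  shows "\<bar>x\<^sup>2 * q + (x\<^sup>2 - 2 * x) * p + p\<^sup>2\<bar> \<le> 5 * e"
proof -
  have x2: "x\<^sup>2 \<ge> x" using x by (simp add: power2_eq_square)
  have "\<bar>p\<bar> \<le> \<bar>x * p\<bar>" using x mult_right_mono[of 1 x "\<bar>p\<bar>"] by (simp add: abs_mult)
  also have "\<bar>x * p\<bar> \<le> \<bar>x\<^sup>2 * p\<bar>" using x2 x by (simp add: abs_mult mult_right_mono)
  finally have pp: "\<bar>p\<bar> \<le> \<bar>x\<^sup>2 * p\<bar>" .
  have xp: "\<bar>x * p\<bar> \<le> \<bar>x\<^sup>2 * p\<bar>" using x2 x by (simp add: abs_mult mult_right_mono)
  have "p\<^sup>2 = \<bar>p\<bar> * \<bar>p\<bar>" by (simp add: power2_eq_square)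
  also have "\<dots> \<le> e * e" using pp p by (intro mult_mono) auto
  also have "\<dots> \<le> e" using e p by (simp add: mult_left_le)
  finally have p2: "p\<^sup>2 \<le> e" .
  have "x\<^sup>2 * q + (x\<^sup>2 - 2 * x) * p + p\<^sup>2 = x\<^sup>2 * q + x\<^sup>2 * p - 2 * (x * p) + p\<^sup>2"
    by (simp add: algebra_simps)
  thus ?thesis using p q xp p2 by (smt (verit) zero_le_power2)
qed

lemma main_pos:
  fixes n nx nt :: "real \<Rightarrow> real \<Rightarrow> real" and s t M :: real
  assumes cn: "continuous_on ({0<..} \<times> {0<..}) (\<lambda>(x,t). n x t)"
    and cnx: "continuous_on ({0<..} \<times> {0<..}) (\<lambda>(x,t). nx x t)"
    and cnt: "continuous_on ({0<..} \<times> {0<..}) (\<lambda>(x,t). nt x t)"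
    and dn: "\<And>x \<tau>. x > 0 \<Longrightarrow> \<tau> > 0 \<Longrightarrow> ((\<lambda>y. n y \<tau>) has_real_derivative nx x \<tau>) (at x)"
    and dnt: "\<And>x \<tau>. x > 0 \<Longrightarrow> \<tau> > 0 \<Longrightarrow> ((\<lambda>s. n x s) has_real_derivative nt x \<tau>) (at \<tau>)"
    and dJ: "\<And>x \<tau>. x > 0 \<Longrightarrow> \<tau> > 0 \<Longrightarrow> ((\<lambda>y. kompaneets_flux n nx y \<tau>) has_real_derivative nt x \<tau>) (at x)"
    and dec1: "\<forall>T. \<forall>e>0. \<exists>R. \<forall>x\<ge>R. \<forall>t. 0 \<le> t \<and> t < T \<longrightarrow> \<bar>x\<^sup>2 * n x t\<bar> < e"
    and dec2: "\<forall>T. \<forall>e>0. \<exists>R>0. \<forall>x\<ge>R. \<forall>t. 1 / x\<^sup>2 \<le> t \<and> t < T \<longrightarrow> \<bar>x\<^sup>2 * nx x t\<bar> < e"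
    and bnd: "\<And>x \<tau>. x > 0 \<Longrightarrow> \<tau> \<in> {0..t} \<Longrightarrow> \<bar>n x \<tau>\<bar> \<le> M"
    and lim0: "\<And>\<tau>. \<tau> > 0 \<Longrightarrow> \<exists>L. ((\<lambda>x. n x \<tau>) \<longlongrightarrow> L) (at_right 0)"
    and int: "\<And>\<tau>. \<tau> \<ge> 0 \<Longrightarrow> (\<lambda>x. n x \<tau>) absolutely_integrable_on {0<..}"
    and st: "0 < s" "s \<le> t"
  shows "((\<lambda>\<tau>. (boundary_value n \<tau>)\<^sup>2) has_integral
            (photon_number n s - photon_number n t)) {s..t}"
proof -
  define J where "J = kompaneets_flux n nx"
  define W where "W y = integral {s..t} (\<lambda>\<tau>. J y \<tau>)" for y
  define h where "h x = n x s - n x t" for x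
  have sub: "{s..t} \<subseteq> {0<..}" using st by auto
  have cJ: "continuous_on {s..t} (\<lambda>\<tau>. J y \<tau>)" if "y > 0" for y
    unfolding J_def kompaneets_flux_def
    using cont_slice_t[OF cn that sub] cont_slice_t[OF cnx that sub]
    by (intro continuous_intros) auto
  have iJ: "(\<lambda>\<tau>. J y \<tau>) integrable_on {s..t}" if "y > 0" for y
    using cJ[OF that] integrable_continuous_interval by blast
  have stepA: "integral {a..b} (\<lambda>x. n x t) - integral {a..b} (\<lambda>x. n x s) = W b - W a"
    if ab: "0 < a" "a \<le> b" for a b
  proof -
    define F where "F \<tau> = integral {a..b} (\<lambda>x. n x \<tau>)" for \<tau>
    have subab: "{a..b} \<subseteq> {0<..}" using ab by auto
    have dF: "(F has_real_derivative (J b \<tau> - J a \<tau>)) (at \<tau> within {s..t})"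
      if \<tau>: "\<tau> \<in> {s..t}" for \<tau>
    proof -
      have \<tau>0: "\<tau> > 0" using \<tau> st by auto
      have "(F has_real_derivative integral (cbox a b) (\<lambda>x. nt x \<tau>)) (at \<tau> within {0<..})"
        unfolding F_def cbox_interval[symmetric]
      proof (rule leibniz_rule_field_derivative[where f="\<lambda>\<tau> x. n x \<tau>" and fx="\<lambda>\<tau> x. nt x \<tau>"])
        fix \<sigma> x :: real assume "\<sigma> \<in> {0<..}" "x \<in> cbox a b"
        thus "((\<lambda>\<sigma>. n x \<sigma>) has_real_derivative nt x \<sigma>) (at \<sigma> within {0<..})"
          using dnt ab by (auto intro: has_field_derivative_at_within)
      next
        fix \<sigma> :: real assume "\<sigma> \<in> {0<..}"
        thus "(\<lambda>x. n x \<sigma>) integrable_on cbox a b"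
          using cont_slice_x[OF cn _ subab] by (auto intro!: integrable_continuous_interval)
      next
        show "continuous_on ({0<..} \<times> cbox a b) (\<lambda>(\<sigma>, x). nt x \<sigma>)"
          using cont_swap[OF cnt subab order_refl] by simp
      qed (use \<tau>0 in auto)
      moreover have "integral (cbox a b) (\<lambda>x. nt x \<tau>) = J b \<tau> - J a \<tau>"
      proof -
        have "((\<lambda>x. nt x \<tau>) has_integral (J b \<tau> - J a \<tau>)) {a..b}"
          by (rule fundamental_theorem_of_calculus)
             (use ab \<tau>0 dJ in \<open>auto simp: J_def has_real_derivative_iff_has_vector_derivative[symmetric]
                intro: has_field_derivative_at_within\<close>)
        thus ?thesis by (simp add: integral_unique)
      qed
      ultimately show ?thesis using sub \<tau> by (auto intro: DERIV_subset)
    qed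
    have "((\<lambda>\<tau>. J b \<tau> - J a \<tau>) has_integral (F t - F s)) {s..t}"
      by (rule fundamental_theorem_of_calculus)
         (use st dF in \<open>auto simp: has_real_derivative_iff_has_vector_derivative[symmetric]\<close>)
    hence "F t - F s = integral {s..t} (\<lambda>\<tau>. J b \<tau> - J a \<tau>)" by (simp add: integral_unique)
    also have "\<dots> = W b - W a" unfolding W_def
      using iJ[of a] iJ[of b] ab by (simp add: integral_diff)
    finally show ?thesis by (simp add: F_def)
  qed
  have stepB: "(W \<longlongrightarrow> 0) at_top"
  proof (rule tendstoI)
    fix e :: real assume e: "e > 0"
    define e1 where "e1 = min 1 (e / (5 * (t - s + 1)))"
    have e10: "e1 > 0" using e st by (simp add: e1_def)
    have e11: "e1 \<le> 1" by (simp add: e1_def)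
    have e1e: "5 * e1 * (t - s) < e"
    proof -
      have "e1 \<le> e / (5 * (t - s + 1))" by (simp add: e1_def)
      hence "5 * e1 * (t - s + 1) \<le> e" using st by (simp add: pos_le_divide_eq mult.commute mult.left_commute)
      thus ?thesis using e10 by (simp add: algebra_simps)
    qed
    obtain R1 where R1: "\<forall>x\<ge>R1. \<forall>\<tau>. 0 \<le> \<tau> \<and> \<tau> < t + 1 \<longrightarrow> \<bar>x\<^sup>2 * n x \<tau>\<bar> < e1"
      using dec1 e10 by blast
    obtain R2 where R2: "\<forall>x\<ge>R2. \<forall>\<tau>. 1 / x\<^sup>2 \<le> \<tau> \<and> \<tau> < t + 1 \<longrightarrow> \<bar>x\<^sup>2 * nx x \<tau>\<bar> < e1"
      using dec2 e10 by blast
    define R where "R = max (max R1 R2) (max 1 (1 / s))"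
    show "\<forall>\<^sub>F x in at_top. dist (W x) 0 < e"
      unfolding eventually_at_top_linorder
    proof (intro exI allI impI)
      fix x assume xR: "x \<ge> R"
      have x1: "x \<ge> 1" and xs: "x \<ge> 1 / s" and xR1: "x \<ge> R1" and xR2: "x \<ge> R2"
        using xR by (auto simp: R_def)
      have x0: "x > 0" using x1 by simp
      have "1 / x\<^sup>2 \<le> 1 / x"
        using x1 by (intro divide_left_mono) (auto simp: power2_eq_square)
      also have "1 / x \<le> s" using xs st x0 by (simp add: divide_le_eq mult.commute)
      finally have xs2: "1 / x\<^sup>2 \<le> s" .
      have "norm (W x) \<le> 5 * e1 * (t - s)"
        unfolding W_def
      proof (rule integral_bound)
        show "s \<le> t" using st by simp
        show "continuous_on {s..t} (\<lambda>\<tau>. J x \<tau>)" using cJ x0 by simp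
        fix \<tau> assume \<tau>: "\<tau> \<in> {s..t}"
        have "\<bar>x\<^sup>2 * n x \<tau>\<bar> < e1" using R1 xR1 \<tau> st by auto
        moreover have "\<bar>x\<^sup>2 * nx x \<tau>\<bar> < e1" using R2 xR2 \<tau> st xs2 by auto
        ultimately show "norm (J x \<tau>) \<le> 5 * e1"
          unfolding J_def kompaneets_flux_def using flux_bound[OF x1 _ _ e11] by simp
      qed
      thus "dist (W x) 0 < e" using e1e by simp
    qed
  qed
  have hI: "h absolutely_integrable_on {0<..}"
    unfolding h_def using int[of s] int[of t] st by (intro set_integral_diff) auto
  have hsub: "h absolutely_integrable_on {a..}" if "a > 0" for a
    by (rule set_integrable_subset[OF hI]) (use that in auto)
  have hnorm: "(\<lambda>x. norm (h x)) integrable_on {a..}" if "a > 0" for a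
    using hsub[OF that] absolutely_integrable_on_def by blast
  have hint: "h integrable_on {a..b}" if "a > 0" for a b
  proof -
    have "{a..b} \<subseteq> {0<..}" using that by auto
    thus ?thesis unfolding h_def
      using cont_slice_x[OF cn _ , of s "{a..b}"] cont_slice_x[OF cn _ , of t "{a..b}"] st that
      by (intro integrable_continuous_interval continuous_intros) auto
  qed
  have stepC: "W a = integral {a..} h" if a0: "a > 0" for a
  proof -
    define b where "b j = a + real j" for j :: nat
    have eq: "W a - W (b j) = integral {a..b j} h" for j
    proof -
      have "{a..b j} \<subseteq> {0<..}" using a0 by auto
      hence "(\<lambda>x. n x s) integrable_on {a..b j}" "(\<lambda>x. n x t) integrable_on {a..b j}"
        using cont_slice_x[OF cn _ , of s "{a..b j}"] cont_slice_x[OF cn _ , of t "{a..b j}"] st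
        by (auto intro: integrable_continuous_interval)
      thus ?thesis using stepA[OF a0, of "b j"] unfolding h_def b_def
        by (simp add: integral_diff)
    qed
    have blim: "filterlim b at_top sequentially" unfolding b_def
      by (rule filterlim_tendsto_add_at_top[OF tendsto_const filterlim_real_sequentially])
    have W0: "(\<lambda>j. W (b j)) \<longlonglongrightarrow> 0" using filterlim_compose[OF stepB blim] .
    have lim1: "(\<lambda>j. integral {a..b j} h) \<longlonglongrightarrow> W a"
      using tendsto_diff[OF tendsto_const W0, of "W a"] eq by simp
    define f where "f j x = (if x \<in> {a..b j} then h x else 0)" for j x
    have fI: "(f j has_integral integral {a..b j} h) {a..}" for j
      unfolding f_def
      by (rule has_integral_restrict[THEN iffD2]) (auto intro: integrable_integral hint a0)
    have lim2: "(\<lambda>j. integral {a..} (f j)) \<longlonglongrightarrow> integral {a..} h"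
    proof (rule dominated_convergence(2))
      show "f j integrable_on {a..}" for j using fI by blast
      show "(\<lambda>x. norm (h x)) integrable_on {a..}" using hnorm a0 by blast
      show "norm (f j x) \<le> norm (h x)" if "x \<in> {a..}" for j x by (simp add: f_def)
      fix x assume "x \<in> {a..}"
      have "\<forall>\<^sub>F j in sequentially. f j x = h x"
        unfolding eventually_sequentially
      proof (intro exI allI impI)
        fix j assume "nat \<lceil>x - a\<rceil> \<le> j"
        hence "x - a \<le> real j" by linarith
        thus "f j x = h x" using \<open>x \<in> {a..}\<close> by (simp add: f_def b_def)
      qed
      thus "(\<lambda>j. f j x) \<longlonglongrightarrow> h x" by (rule tendsto_eventually)
    qed
    have "(\<lambda>j. integral {a..} (f j)) = (\<lambda>j. integral {a..b j} h)"
      using fI by (intro ext integral_unique) blast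
    with lim2 lim1 show ?thesis using LIMSEQ_unique by metis
  qed
  have stepD: "(W \<longlongrightarrow> integral {0<..} h) (at_right 0)"
    unfolding tendsto_at_iff_sequentially
  proof (intro allI impI)
    fix X :: "nat \<Rightarrow> real" assume X: "\<forall>i. X i \<in> {0<..} - {0}" and X0: "X \<longlonglongrightarrow> 0"
    have Xp: "X i > 0" for i using X by auto
    define f where "f i x = (if x \<in> {X i..} then h x else 0)" for i x
    have fI: "(f i has_integral integral {X i..} h) {0<..}" for i
    proof -
      have "h integrable_on {X i..}" using hsub[OF Xp[of i]] absolutely_integrable_on_def by blast
      thus ?thesis unfolding f_def
        by (intro has_integral_restrict[THEN iffD2]) (use Xp[of i] in \<open>auto intro: integrable_integral\<close>)
    qed
    have lim2: "(\<lambda>i. integral {0<..} (f i)) \<longlonglongrightarrow> integral {0<..} h"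
    proof (rule dominated_convergence(2))
      show "f i integrable_on {0<..}" for i using fI by blast
      show "(\<lambda>x. norm (h x)) integrable_on {0<..}" using hI absolutely_integrable_on_def by blast
      show "norm (f i x) \<le> norm (h x)" if "x \<in> {0<..}" for i x by (simp add: f_def)
      fix x :: real assume "x \<in> {0<..}"
      hence "\<forall>\<^sub>F i in sequentially. X i < x" using order_tendstoD(2)[OF X0] by auto
      hence "\<forall>\<^sub>F i in sequentially. f i x = h x" by eventually_elim (simp add: f_def)
      thus "(\<lambda>i. f i x) \<longlonglongrightarrow> h x" by (rule tendsto_eventually)
    qed
    have "(\<lambda>i. integral {0<..} (f i)) = W \<circ> X"
      using fI stepC Xp by (intro ext) (auto simp: integral_unique)
    with lim2 show "(W \<circ> X) \<longlonglongrightarrow> integral {0<..} h" by simp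
  qed
  define Q where "Q a = integral {s..t} (\<lambda>\<tau>. a\<^sup>2 * n a \<tau>)" for a
  define V where "V a = integral {s..t} (\<lambda>\<tau>. (a\<^sup>2 - 4*a) * n a \<tau> + (n a \<tau>)\<^sup>2)" for a
  have cn_t: "continuous_on {s..t} (\<lambda>\<tau>. n a \<tau>)" if "a > 0" for a
    using cont_slice_t[OF cn that sub] .
  have cnx_t: "continuous_on {s..t} (\<lambda>\<tau>. nx a \<tau>)" if "a > 0" for a
    using cont_slice_t[OF cnx that sub] .
  have stepE: "(Q has_real_derivative (W a - V a)) (at a)" if a0: "a > 0" for a
  proof -
    have c1: "continuous_on ({0<..} \<times> {s..t}) (\<lambda>p. n (fst p) (snd p))"
      using cont_sub[OF cn order_refl sub] by (simp add: case_prod_beta)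
    have c2: "continuous_on ({0<..} \<times> {s..t}) (\<lambda>p. nx (fst p) (snd p))"
      using cont_sub[OF cnx order_refl sub] by (simp add: case_prod_beta)
    have "(Q has_real_derivative integral (cbox s t) (\<lambda>\<tau>. 2*a*n a \<tau> + a\<^sup>2*nx a \<tau>)) (at a within {0<..})"
      unfolding Q_def cbox_interval[symmetric]
    proof (rule leibniz_rule_field_derivative[where f="\<lambda>a \<tau>. a\<^sup>2 * n a \<tau>" and fx="\<lambda>a \<tau>. 2*a*n a \<tau> + a\<^sup>2*nx a \<tau>"])
      fix b \<tau> :: real assume b: "b \<in> {0<..}" and \<tau>: "\<tau> \<in> cbox s t"
      have d: "((\<lambda>b. n b \<tau>) has_real_derivative nx b \<tau>) (at b)" using dn b \<tau> st by auto
      have "((\<lambda>b. b\<^sup>2 * n b \<tau>) has_real_derivative 2*b*n b \<tau> + b\<^sup>2*nx b \<tau>) (at b)"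
      proof -
        have "((\<lambda>b. b\<^sup>2 * n b \<tau>) has_real_derivative (real 2 * b^(2 - Suc 0)) * n b \<tau> + nx b \<tau> * b\<^sup>2) (at b)"
          by (rule DERIV_mult[OF DERIV_pow d])
        moreover have "(real 2 * b^(2 - Suc 0)) * n b \<tau> + nx b \<tau> * b\<^sup>2 = 2*b*n b \<tau> + b\<^sup>2*nx b \<tau>"
          by (simp add: power2_eq_square)
        ultimately show ?thesis by (simp only:)
      qed
      thus "((\<lambda>b. b\<^sup>2 * n b \<tau>) has_real_derivative 2*b*n b \<tau> + b\<^sup>2*nx b \<tau>) (at b within {0<..})"
        by (rule has_field_derivative_at_within)
    next
      fix b :: real assume "b \<in> {0<..}"
      thus "(\<lambda>\<tau>. b\<^sup>2 * n b \<tau>) integrable_on cbox s t"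
      proof -
        have c: "continuous_on {s..t} (\<lambda>\<tau>. n b \<tau>)" using cn_t \<open>b \<in> {0<..}\<close> by auto
        show ?thesis unfolding cbox_interval
          by (rule integrable_continuous_interval, rule continuous_on_mult[OF continuous_on_const c])
      qed
    next
      have "continuous_on ({0<..} \<times> {s..t}) (\<lambda>p. 2 * fst p * n (fst p) (snd p) + (fst p)\<^sup>2 * nx (fst p) (snd p))"
        by (intro continuous_intros c1 c2)
      thus "continuous_on ({0<..} \<times> cbox s t) (\<lambda>(a, \<tau>). 2*a*n a \<tau> + a\<^sup>2*nx a \<tau>)"
        by (simp add: case_prod_beta)
    qed (use a0 in auto)
    moreover have "integral (cbox s t) (\<lambda>\<tau>. 2*a*n a \<tau> + a\<^sup>2*nx a \<tau>) = W a - V a"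
    proof -
      have i1: "(\<lambda>\<tau>. 2*a*n a \<tau> + a\<^sup>2*nx a \<tau>) integrable_on {s..t}"
        by (rule integrable_continuous_interval, intro continuous_on_add continuous_on_mult continuous_on_const cn_t[OF a0] cnx_t[OF a0])
      have i2: "(\<lambda>\<tau>. (a\<^sup>2 - 4*a) * n a \<tau> + (n a \<tau>)\<^sup>2) integrable_on {s..t}"
        by (rule integrable_continuous_interval, intro continuous_on_add continuous_on_mult continuous_on_power continuous_on_const cn_t[OF a0])
      have "W a = integral {s..t} (\<lambda>\<tau>. (2*a*n a \<tau> + a\<^sup>2*nx a \<tau>) + ((a\<^sup>2 - 4*a) * n a \<tau> + (n a \<tau>)\<^sup>2))"
        unfolding W_def J_def kompaneets_flux_def
      proof (rule integral_cong)
        fix \<tau> show "a\<^sup>2 * nx a \<tau> + (a\<^sup>2 - 2 * a) * n a \<tau> + (n a \<tau>)\<^sup>2 =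
           (2*a*n a \<tau> + a\<^sup>2*nx a \<tau>) + ((a\<^sup>2 - 4*a) * n a \<tau> + (n a \<tau>)\<^sup>2)"
          by (simp add: left_diff_distrib distrib_right)
      qed
      also have "\<dots> = integral {s..t} (\<lambda>\<tau>. 2*a*n a \<tau> + a\<^sup>2*nx a \<tau>) + V a"
        unfolding V_def by (rule integral_add[OF i1 i2])
      finally show ?thesis by simp
    qed
    moreover have "at a within {0<..} = at a" by (rule at_within_open) (use a0 in auto)
    ultimately show ?thesis by metis
  qed
  have M0: "M \<ge> 0" using bnd[of 1 s] st by auto
  have Qb: "\<bar>Q a\<bar> \<le> (M * (t - s)) * a\<^sup>2" if a0: "a > 0" for a
  proof -
    have "norm (Q a) \<le> (a\<^sup>2 * M) * (t - s)"
      unfolding Q_def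
    proof (rule integral_bound)
      show "s \<le> t" using st by simp
      show "continuous_on {s..t} (\<lambda>\<tau>. a\<^sup>2 * n a \<tau>)" using cn_t[OF a0] by (intro continuous_intros)
      fix \<tau> assume "\<tau> \<in> {s..t}"
      hence "\<bar>n a \<tau>\<bar> \<le> M" using bnd[of a \<tau>] a0 st by auto
      thus "norm (a\<^sup>2 * n a \<tau>) \<le> a\<^sup>2 * M" by (simp add: abs_mult mult_left_mono)
    qed
    thus ?thesis by (simp add: algebra_simps)
  qed
  define g where "g \<tau> = (boundary_value n \<tau>)\<^sup>2" for \<tau>
  have bvlim: "((\<lambda>x. n x \<tau>) \<longlongrightarrow> boundary_value n \<tau>) (at_right 0)" if \<tau>0: "\<tau> > 0" for \<tau>
  proof -
    obtain L where L: "((\<lambda>x. n x \<tau>) \<longlongrightarrow> L) (at_right 0)" using lim0[OF \<tau>0] by blast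
    hence "boundary_value n \<tau> = L" unfolding boundary_value_def by (intro tendsto_Lim) auto
    with L show ?thesis by simp
  qed
  have vlim: "((\<lambda>a. (a\<^sup>2 - 4*a) * n a \<tau> + (n a \<tau>)\<^sup>2) \<longlongrightarrow> g \<tau>) (at_right 0)" if "\<tau> > 0" for \<tau>
  proof -
    have "((\<lambda>a. (a\<^sup>2 - 4*a) * n a \<tau> + (n a \<tau>)\<^sup>2) \<longlongrightarrow>
        ((0::real)\<^sup>2 - 4*0) * boundary_value n \<tau> + (boundary_value n \<tau>)\<^sup>2) (at_right 0)"
      by (intro tendsto_add tendsto_mult tendsto_diff tendsto_power tendsto_const tendsto_ident_at bvlim that)
    thus ?thesis by (simp add: g_def)
  qed
  have domc: "g integrable_on {s..t} \<and> (\<lambda>i. V (X i)) \<longlonglongrightarrow> integral {s..t} g"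
    if Xp: "\<forall>i. X i > 0" and X0: "X \<longlonglongrightarrow> 0" for X :: "nat \<Rightarrow> real"
  proof -
    obtain K where K: "\<And>i. norm (X i) \<le> K" using convergent_imp_Bseq[OF convergentI[OF X0]] BseqE by metis
    have K0: "K \<ge> 0" using K[of 0] by simp
    define f where "f i \<tau> = ((X i)\<^sup>2 - 4 * X i) * n (X i) \<tau> + (n (X i) \<tau>)\<^sup>2" for i \<tau>
    have fi: "f i integrable_on {s..t}" for i
      unfolding f_def
      by (rule integrable_continuous_interval, intro continuous_on_add continuous_on_mult
          continuous_on_power continuous_on_const cn_t) (use Xp in auto)
    have hi: "(\<lambda>_. (K\<^sup>2 + 4 * K) * M + M\<^sup>2) integrable_on {s..t}"
      by (rule integrable_continuous_interval, rule continuous_on_const)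
    have le: "norm (f i \<tau>) \<le> (K\<^sup>2 + 4 * K) * M + M\<^sup>2" if "\<tau> \<in> {s..t}" for i \<tau>
    proof -
      have nb: "\<bar>n (X i) \<tau>\<bar> \<le> M" using bnd[of "X i" \<tau>] Xp that st by auto
      have xb: "\<bar>X i\<bar> \<le> K" using K[of i] by simp
      have "\<bar>(X i)\<^sup>2 - 4 * X i\<bar> \<le> \<bar>X i\<bar>\<^sup>2 + 4 * \<bar>X i\<bar>" by (simp add: abs_triangle_ineq4[THEN order_trans] abs_mult)
      also have "\<dots> \<le> K\<^sup>2 + 4 * K" using xb by (intro add_mono power_mono) auto
      finally have A: "\<bar>(X i)\<^sup>2 - 4 * X i\<bar> \<le> K\<^sup>2 + 4 * K" .
      have "\<bar>((X i)\<^sup>2 - 4 * X i) * n (X i) \<tau>\<bar> \<le> (K\<^sup>2 + 4 * K) * M"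
        unfolding abs_mult using A nb by (intro mult_mono) auto
      moreover have "(n (X i) \<tau>)\<^sup>2 \<le> M\<^sup>2"
        using nb power_mono[of "\<bar>n (X i) \<tau>\<bar>" M 2] by simp
      ultimately show ?thesis unfolding f_def real_norm_def
        by (smt (verit) zero_le_power2)
    qed
    have conv: "(\<lambda>i. f i \<tau>) \<longlonglongrightarrow> g \<tau>" if "\<tau> \<in> {s..t}" for \<tau>
    proof -
      have "\<tau> > 0" using that st by auto
      from vlim[OF this] have "((\<lambda>a. (a\<^sup>2 - 4*a) * n a \<tau> + (n a \<tau>)\<^sup>2) \<circ> X) \<longlonglongrightarrow> g \<tau>"
        unfolding tendsto_at_iff_sequentially using Xp X0 by auto
      thus ?thesis by (simp add: f_def o_def)
    qed
    have "g integrable_on {s..t}" "(\<lambda>i. integral {s..t} (f i)) \<longlonglongrightarrow> integral {s..t} g"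
      using dominated_convergence[OF fi hi le conv] by auto
    moreover have "V (X i) = integral {s..t} (f i)" for i unfolding V_def f_def[abs_def] by simp
    ultimately show ?thesis by simp
  qed
  have intg: "g integrable_on {s..t}"
    using domc[of "\<lambda>i. inverse (real (Suc i))"] LIMSEQ_inverse_real_of_nat by auto
  have Vlim: "(V \<longlongrightarrow> integral {s..t} g) (at_right 0)"
    unfolding tendsto_at_iff_sequentially using domc by (auto simp: o_def)
  have Dlim: "((\<lambda>a. W a - V a) \<longlongrightarrow> integral {0<..} h - integral {s..t} g) (at_right 0)"
    by (rule tendsto_diff[OF stepD Vlim])
  have "integral {0<..} h - integral {s..t} g = 0"
    by (rule deriv_limit_zero[OF stepE Dlim Qb])
  moreover have "integral {0<..} h = photon_number n s - photon_number n t"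
  proof -
    have "(\<lambda>x. n x s) integrable_on {0<..}" "(\<lambda>x. n x t) integrable_on {0<..}"
      using int[of s] int[of t] st absolutely_integrable_on_def by auto
    thus ?thesis unfolding h_def photon_number_def by (rule integral_diff)
  qed
  ultimately show ?thesis using intg unfolding g_def[abs_def]
    by (metis eq_iff_diff_eq_0 has_integral_integrable_integral)
qed

theorem proposition2p9:
  fixes n0 :: "real \<Rightarrow> real" and n :: "real \<Rightarrow> real \<Rightarrow> real" and s t :: real
  assumes n0_nonneg: "\<forall>x>0. 0 \<le> n0 x"
    and n0_bounded: "\<exists>B. \<forall>x>0. \<bar>n0 x\<bar> \<le> B"
    and n0_meas: "set_borel_measurable lborel {0<..} n0"
    and n0_decay: "((\<lambda>x. x\<^sup>2 * n0 x) \<longlongrightarrow> 0) at_top"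
    and sol: "kompaneets_global_solution n0 n"
    and st: "0 \<le> s" "s \<le> t"
  shows "((\<lambda>\<tau>. (boundary_value n \<tau>)\<^sup>2) has_integral
            (photon_number n s - photon_number n t)) {s..t}"
proof -
  have int: "\<And>\<tau>. \<tau> \<ge> 0 \<Longrightarrow> (\<lambda>x. n x \<tau>) absolutely_integrable_on {0<..}"
    and L1c: "\<And>\<tau>. \<tau> \<ge> 0 \<Longrightarrow> ((\<lambda>s. integral {0<..} (\<lambda>x. \<bar>n x s - n x \<tau>\<bar>)) \<longlongrightarrow> 0) (at \<tau> within {0..})"
    and lim0: "\<And>\<tau>. \<tau> > 0 \<Longrightarrow> \<exists>L. ((\<lambda>x. n x \<tau>) \<longlongrightarrow> L) (at_right 0)"
  proof -
    note S = sol[unfolded kompaneets_global_solution_def]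
    show "\<And>\<tau>. \<tau> \<ge> 0 \<Longrightarrow> (\<lambda>x. n x \<tau>) absolutely_integrable_on {0<..}"
      using S[THEN conjunct2, THEN conjunct2, THEN conjunct1] by blast
    show "\<And>\<tau>. \<tau> \<ge> 0 \<Longrightarrow> ((\<lambda>s. integral {0<..} (\<lambda>x. \<bar>n x s - n x \<tau>\<bar>)) \<longlongrightarrow> 0) (at \<tau> within {0..})"
      using S[THEN conjunct2, THEN conjunct2, THEN conjunct2, THEN conjunct1] by blast
    show "\<And>\<tau>. \<tau> > 0 \<Longrightarrow> \<exists>L. ((\<lambda>x. n x \<tau>) \<longlongrightarrow> L) (at_right 0)"
      using S[THEN conjunct2, THEN conjunct2, THEN conjunct2, THEN conjunct2, THEN conjunct2, THEN conjunct2] by blast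
  qed
  note S = sol[unfolded kompaneets_global_solution_def]
  obtain M where bndM: "\<forall>\<tau>\<in>{0..t}. \<forall>x>0. \<bar>n x \<tau>\<bar> \<le> M"
    using S[THEN conjunct2, THEN conjunct2, THEN conjunct2, THEN conjunct2, THEN conjunct1] by blast
  obtain nx nxx nt where
    cn: "continuous_on ({0<..} \<times> {0<..}) (\<lambda>(x,t). n x t)" and
    cnx: "continuous_on ({0<..} \<times> {0<..}) (\<lambda>(x,t). nx x t)" and
    cnt: "continuous_on ({0<..} \<times> {0<..}) (\<lambda>(x,t). nt x t)" and
    ders: "\<forall>x>0. \<forall>t>0.
           ((\<lambda>y. n y t) has_real_derivative nx x t) (at x) \<and>
           ((\<lambda>y. nx y t) has_real_derivative nxx x t) (at x) \<and>
           ((\<lambda>s. n x s) has_real_derivative nt x t) (at t) \<and>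
           ((\<lambda>y. kompaneets_flux n nx y t) has_real_derivative nt x t) (at x)" and
    dec1: "\<forall>T. \<forall>e>0. \<exists>R. \<forall>x\<ge>R. \<forall>t. 0 \<le> t \<and> t < T \<longrightarrow> \<bar>x\<^sup>2 * n x t\<bar> < e" and
    dec2: "\<forall>T. \<forall>e>0. \<exists>R>0. \<forall>x\<ge>R. \<forall>t. 1 / x\<^sup>2 \<le> t \<and> t < T \<longrightarrow> \<bar>x\<^sup>2 * nx x t\<bar> < e"
    using S[THEN conjunct2, THEN conjunct2, THEN conjunct2, THEN conjunct2, THEN conjunct2, THEN conjunct1]
    by (elim exE conjE) blast
  have pos: "((\<lambda>\<tau>. (boundary_value n \<tau>)\<^sup>2) has_integral
            (photon_number n s' - photon_number n t)) {s'..t}" if "0 < s'" "s' \<le> t" for s'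
    by (rule main_pos[OF cn cnx cnt _ _ _ dec1 dec2 _ lim0 int that])
       (use ders bndM in auto)
  define N where "N = photon_number n"
  define g where "g \<tau> = (boundary_value n \<tau>)\<^sup>2" for \<tau>
  show ?thesis
  proof (cases "s > 0")
    case True
    thus ?thesis using pos st by simp
  next
    case False
    hence s0: "s = 0" using st by simp
    show ?thesis
    proof (cases "t = 0")
      case True
      thus ?thesis using s0 has_integral_refl(1)[of "g" 0] by (simp add: g_def[abs_def])
    next
      case False
      hence t0: "t > 0" using st s0 by simp
      define sk where "sk k = t / real (Suc k)" for k
      have skp: "sk k > 0" for k using t0 by (simp add: sk_def)
      have skt: "sk k \<le> t" for k using t0 by (simp add: sk_def field_simps)
      have skmono: "sk (Suc k) \<le> sk k" for k using t0 by (simp add: sk_def frac_le)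
      have sk0: "sk \<longlonglongrightarrow> 0"
      proof -
        have "(\<lambda>k. t * inverse (real (Suc k))) \<longlonglongrightarrow> t * 0"
          by (intro tendsto_mult tendsto_const LIMSEQ_inverse_real_of_nat)
        thus ?thesis unfolding sk_def by (simp add: divide_inverse)
      qed
      have Nlim: "(\<lambda>k. N (sk k)) \<longlonglongrightarrow> N 0"
      proof -
        have "((\<lambda>s. integral {0<..} (\<lambda>x. \<bar>n x s - n x 0\<bar>)) \<circ> sk) \<longlonglongrightarrow> 0"
        proof -
          have skin: "\<forall>i. sk i \<in> {0..} - {0}" using skp by (metis Diff_iff atLeast_iff less_imp_le less_numeral_extra(3) singletonD)
          show ?thesis using L1c[of 0, unfolded tendsto_at_iff_sequentially, rule_format, OF order_refl skin[rule_format] sk0] by simp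
        qed
        hence g0: "(\<lambda>k. integral {0<..} (\<lambda>x. \<bar>n x (sk k) - n x 0\<bar>)) \<longlonglongrightarrow> 0" by (simp add: o_def)
        have "(\<lambda>k. N (sk k) - N 0) \<longlonglongrightarrow> 0"
        proof (rule Lim_null_comparison[OF _ g0], intro always_eventually allI)
          fix k
          have a1: "(\<lambda>x. n x (sk k)) absolutely_integrable_on {0<..}" using int skp[of k] by simp
          have a0: "(\<lambda>x. n x 0) absolutely_integrable_on {0<..}" using int by simp
          have ad: "(\<lambda>x. n x (sk k) - n x 0) absolutely_integrable_on {0<..}"
            by (rule set_integral_diff(1)[OF a1 a0])
          have i1: "(\<lambda>x. n x (sk k)) integrable_on {0<..}"
            using a1 unfolding absolutely_integrable_on_def by (rule conjunct1)
          have i0: "(\<lambda>x. n x 0) integrable_on {0<..}"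
            using a0 unfolding absolutely_integrable_on_def by (rule conjunct1)
          have id: "(\<lambda>x. n x (sk k) - n x 0) integrable_on {0<..}"
            using ad unfolding absolutely_integrable_on_def by (rule conjunct1)
          have ida: "(\<lambda>x. norm (n x (sk k) - n x 0)) integrable_on {0<..}"
            using ad unfolding absolutely_integrable_on_def by (rule conjunct2)
          have "N (sk k) - N 0 = integral {0<..} (\<lambda>x. n x (sk k) - n x 0)"
            unfolding N_def photon_number_def by (rule integral_diff[OF i1 i0, symmetric])
          also have "norm \<dots> \<le> integral {0<..} (\<lambda>x. norm (n x (sk k) - n x 0))"
            by (rule integral_norm_bound_integral[OF id ida]) simp
          also have "\<dots> = integral {0<..} (\<lambda>x. \<bar>n x (sk k) - n x 0\<bar>)" by simp
          finally show "norm (N (sk k) - N 0) \<le> integral {0<..} (\<lambda>x. \<bar>n x (sk k) - n x 0\<bar>)" .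
        qed
        from tendsto_add[OF this tendsto_const[of "N 0"]] show ?thesis by simp
      qed
      define f where "f k \<tau> = (if \<tau> \<in> {sk k<..<t} then g \<tau> else 0)" for k \<tau>
      have fI: "(f k has_integral (N (sk k) - N t)) {0<..<t}" for k
      proof -
        have "(g has_integral (N (sk k) - N t)) {sk k..t}"
          using pos[OF skp[of k] skt[of k]] unfolding N_def g_def[abs_def] .
        hence "(g has_integral (N (sk k) - N t)) {sk k<..<t}"
          by (subst (asm) has_integral_Icc_iff_Ioo)
        thus ?thesis unfolding f_def
          by (intro has_integral_restrict[THEN iffD2]) (use skp[of k] in auto)
      qed
      have mc: "g integrable_on {0<..<t} \<and> (\<lambda>k. integral {0<..<t} (f k)) \<longlonglongrightarrow> integral {0<..<t} g"
      proof (rule monotone_convergence_increasing)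
        show "f k integrable_on {0<..<t}" for k using fI by blast
        show "f k x \<le> f (Suc k) x" if "x \<in> {0<..<t}" for k x
          using skmono[of k] by (auto simp: f_def g_def)
        fix x assume x: "x \<in> {0<..<t}"
        hence "\<forall>\<^sub>F k in sequentially. sk k < x" using order_tendstoD(2)[OF sk0] by auto
        hence "\<forall>\<^sub>F k in sequentially. f k x = g x" by eventually_elim (use x in \<open>simp add: f_def\<close>)
        thus "(\<lambda>k. f k x) \<longlonglongrightarrow> g x" by (rule tendsto_eventually)
      next
        have "(\<lambda>k. integral {0<..<t} (f k)) = (\<lambda>k. N (sk k) - N t)"
          using fI by (intro ext integral_unique) blast
        moreover have "(\<lambda>k. N (sk k) - N t) \<longlonglongrightarrow> N 0 - N t" by (intro tendsto_diff Nlim tendsto_const)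
        ultimately show "bounded (range (\<lambda>k. integral {0<..<t} (f k)))"
          using convergent_imp_bounded by metis
      qed
      have "(\<lambda>k. integral {0<..<t} (f k)) = (\<lambda>k. N (sk k) - N t)"
        using fI by (intro ext integral_unique) blast
      moreover have "(\<lambda>k. N (sk k) - N t) \<longlonglongrightarrow> N 0 - N t" by (intro tendsto_diff Nlim tendsto_const)
      ultimately have "integral {0<..<t} g = N 0 - N t" using mc LIMSEQ_unique by metis
      hence "(g has_integral (N 0 - N t)) {0<..<t}" using mc by (metis has_integral_integrable_integral)
      hence "(g has_integral (N 0 - N t)) {0..t}" using has_integral_Icc_iff_Ioo by blast
      thus ?thesis using s0 by (simp add: N_def g_def[abs_def])
    qed
  qed
qed

end
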